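(* Let $S$ be a semiring and let $L\xrightarrow{f}M\xrightarrow{g}N$ be $S$-linear maps of left $S$-semimodules. (1) Suppose $g$ is injective. (a) $f$ is $k$-normal if and only if $g\circ f$ is $k$-normal. (b) If $g\circ f$ is $i$-normal (resp. normal), then $f$ is $i$-normal (resp. normal). (c) If moreover $g$ is $i$-normal, then $f$ is $i$-normal (resp. normal) if and only if $g\circ f$ is $i$-normal (resp. normal). (2) Suppose $f$ is surjective. (a) $g$ is $i$-normal if and only if $g\circ f$ is $i$-normal. (b) If $g\circ f$ is $k$-normal (resp. normal), then $g$ is $k$-normal (resp. normal). (c) If moreover $f$ is $k$-normal, then $g$ is $k$-normal (resp. normal) if and only if $g\circ f$ is $k$-normal (resp. normal).
   Context: A semiring $(S,+,0,\cdot,1)$ consists of a commutative monoid $(S,+,0)$ and a monoid $(S,\cdot,1)$ with $0\neq 1$, absorbing zero and both distributive laws; left $S$-semimodules and $S$-linear maps are as for modules over rings (without subtraction). For an $S$-linear map $h:X\to Y$, $\mathrm{Ker}(h)=\{x\in X\mid h(x)=0\}$. $h$ is $k$-normal if $h(x)=h(x')$ implies $x+k=x'+k'$ for some $k,k'\in\mathrm{Ker}(h)$; $h$ is $i$-normal if $h(X)=\overline{h(X)}$, where $\overline{h(X)}=\{y\in Y\mid y+h(x_1)=h(x_2)\text{ for some }x_1,x_2\in X\}$; $h$ is normal if it is both $k$-normal and $i$-normal. *)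

theory Defs
  imports Main
begin

definition semimodule :: "('s::semiring_1 \<Rightarrow> 'x::comm_monoid_add \<Rightarrow> 'x) \<Rightarrow> bool" where
  "semimodule act \<longleftrightarrow>
     (\<forall>s t x. act (s * t) x = act s (act t x)) \<and>
     (\<forall>s t x. act (s + t) x = act s x + act t x) \<and>
     (\<forall>s x y. act s (x + y) = act s x + act s y) \<and>
     (\<forall>x. act 1 x = x) \<and>
     (\<forall>x. act 0 x = 0) \<and>
     (\<forall>s. act s 0 = 0)"

definition s_linear ::
  "('s::semiring_1 \<Rightarrow> 'x::comm_monoid_add \<Rightarrow> 'x) \<Rightarrow> ('s \<Rightarrow> 'y::comm_monoid_add \<Rightarrow> 'y) \<Rightarrow> ('x \<Rightarrow> 'y) \<Rightarrow> bool" where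
  "s_linear actX actY h \<longleftrightarrow>
     (\<forall>x x'. h (x + x') = h x + h x') \<and> (\<forall>s x. h (actX s x) = actY s (h x))"

definition Ker :: "('x \<Rightarrow> 'y::zero) \<Rightarrow> 'x set" where
  "Ker h = {x. h x = 0}"

definition k_normal :: "('x::comm_monoid_add \<Rightarrow> 'y::comm_monoid_add) \<Rightarrow> bool" where
  "k_normal h \<longleftrightarrow>
     (\<forall>x x'. h x = h x' \<longrightarrow> (\<exists>k\<in>Ker h. \<exists>k'\<in>Ker h. x + k = x' + k'))"

definition img_closure :: "('x \<Rightarrow> 'y::comm_monoid_add) \<Rightarrow> 'y set" where
  "img_closure h = {y. \<exists>x1 x2. y + h x1 = h x2}"

definition i_normal :: "('x \<Rightarrow> 'y::comm_monoid_add) \<Rightarrow> bool" where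
  "i_normal h \<longleftrightarrow> range h = img_closure h"

definition normal :: "('x::comm_monoid_add \<Rightarrow> 'y::comm_monoid_add) \<Rightarrow> bool" where
  "normal h \<longleftrightarrow> k_normal h \<and> i_normal h"

end

theory Submission
  imports Defs
begin


lemma lin_zero:
  assumes "semimodule aX" "semimodule aY" "s_linear aX aY h"
  shows "h 0 = 0"
proof -
  have "h (aX 0 0) = aY 0 (h 0)" using assms(3) unfolding s_linear_def by blast
  then show ?thesis using assms(1,2) unfolding semimodule_def by simp
qed

lemma lin_add: "s_linear aX aY h \<Longrightarrow> h (x + y) = h x + h y"
  unfolding s_linear_def by blast

lemma range_sub: "h 0 = 0 \<Longrightarrow> range h \<subseteq> img_closure h"
  unfolding img_closure_def by (auto, metis add.right_neutral)

lemma P1a: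
  assumes "inj g" "g 0 = 0"
  shows "k_normal f \<longleftrightarrow> k_normal (g \<circ> f)"
proof -
  have K: "Ker (g \<circ> f) = Ker f" using assms unfolding Ker_def by (auto, metis injD)
  show ?thesis unfolding k_normal_def K using assms(1) by (auto dest: injD)
qed

lemma P1b:
  assumes "inj g" "f 0 = 0" "s_linear aM aN g" "i_normal (g \<circ> f)"
  shows "i_normal f"
  unfolding i_normal_def
proof
  show "range f \<subseteq> img_closure f" using range_sub assms(2) .
  show "img_closure f \<subseteq> range f"
  proof
    fix y assume "y \<in> img_closure f"
    then obtain x1 x2 where e: "y + f x1 = f x2" unfolding img_closure_def by auto
    have "g y + (g \<circ> f) x1 = (g \<circ> f) x2" using e lin_add[OF assms(3), of y "f x1"] by simp
    then have "g y \<in> img_closure (g \<circ> f)" unfolding img_closure_def by blast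
    then have "g y \<in> range (g \<circ> f)" using assms(4) unfolding i_normal_def by simp
    then obtain x where "g y = g (f x)" by auto
    then show "y \<in> range f" using assms(1) by (auto dest: injD)
  qed
qed

lemma P1c:
  assumes "inj g" "g 0 = 0" "s_linear aM aN g" "i_normal g" "i_normal f" "f 0 = 0"
  shows "i_normal (g \<circ> f)"
  unfolding i_normal_def
proof
  show "range (g \<circ> f) \<subseteq> img_closure (g \<circ> f)"
  proof
    fix z assume "z \<in> range (g \<circ> f)"
    then obtain x where "z = g (f x)" by auto
    then have "z + (g \<circ> f) 0 = (g \<circ> f) x" using assms(2,6) by simp
    then show "z \<in> img_closure (g \<circ> f)" unfolding img_closure_def by blast
  qed
  show "img_closure (g \<circ> f) \<subseteq> range (g \<circ> f)"
  proof
    fix z assume "z \<in> img_closure (g \<circ> f)"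
    then obtain x1 x2 where e: "z + g (f x1) = g (f x2)" unfolding img_closure_def by auto
    then have "z \<in> img_closure g" unfolding img_closure_def by blast
    then have "z \<in> range g" using assms(4) unfolding i_normal_def by simp
    then obtain m where m: "z = g m" by auto
    have "g (m + f x1) = g (f x2)" using e m lin_add[OF assms(3)] by simp
    then have "m + f x1 = f x2" using assms(1) by (auto dest: injD)
    then have "m \<in> img_closure f" unfolding img_closure_def by blast
    then have "m \<in> range f" using assms(5) unfolding i_normal_def by simp
    then show "z \<in> range (g \<circ> f)" using m by auto
  qed
qed

lemma P2a:
  assumes "surj f"
  shows "i_normal g \<longleftrightarrow> i_normal (g \<circ> f)"
proof -
  have r: "range (g \<circ> f) = range g" using assms by (metis image_comp)
  have c: "img_closure (g \<circ> f) = img_closure g"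
    unfolding img_closure_def using assms by simp (metis surjD)
  show ?thesis unfolding i_normal_def r c ..
qed

lemma P2b:
  assumes "surj f" "s_linear aL aM f" "k_normal (g \<circ> f)"
  shows "k_normal g"
  unfolding k_normal_def
proof (intro allI impI)
  fix m m' assume e: "g m = g m'"
  obtain x where x: "m = f x" using assms(1) by (metis surjD)
  obtain x' where x': "m' = f x'" using assms(1) by (metis surjD)
  obtain k k' where k: "k \<in> Ker (g \<circ> f)" "k' \<in> Ker (g \<circ> f)" "x + k = x' + k'"
    using assms(3) e x x' unfolding k_normal_def by force
  have "m + f k = m' + f k'" using k(3) x x' lin_add[OF assms(2)] by metis
  moreover have "f k \<in> Ker g" "f k' \<in> Ker g" using k unfolding Ker_def by auto
  ultimately show "\<exists>k\<in>Ker g. \<exists>k'\<in>Ker g. m + k = m' + k'" by blast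
qed

lemma P2c:
  assumes "surj f" "s_linear aL aM f" "s_linear aM aN g" "g 0 = 0" "k_normal f" "k_normal g"
  shows "k_normal (g \<circ> f)"
  unfolding k_normal_def
proof (intro allI impI)
  fix x x' assume e: "(g \<circ> f) x = (g \<circ> f) x'"
  obtain k k' where k: "k \<in> Ker g" "k' \<in> Ker g" "f x + k = f x' + k'"
    using assms(6) e unfolding k_normal_def by force
  obtain a where a: "k = f a" using assms(1) by (metis surjD)
  obtain a' where a': "k' = f a'" using assms(1) by (metis surjD)
  have "f (x + a) = f (x' + a')" using k(3) a a' lin_add[OF assms(2)] by metis
  then obtain c c' where c: "c \<in> Ker f" "c' \<in> Ker f" "x + a + c = x' + a' + c'"
    using assms(5) unfolding k_normal_def by blast
  have "(g \<circ> f) (a + c) = 0" using c(1) k(1) a lin_add[OF assms(2)] unfolding Ker_def by simp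
  moreover have "(g \<circ> f) (a' + c') = 0" using c(2) k(2) a' lin_add[OF assms(2)] unfolding Ker_def by simp
  moreover have "x + (a + c) = x' + (a' + c')" using c(3) by (simp add: add.assoc)
  ultimately show "\<exists>k\<in>Ker (g \<circ> f). \<exists>k'\<in>Ker (g \<circ> f). x + k = x' + k'"
    unfolding Ker_def by blast
qed

theorem mainTheorem4:
  fixes actL :: "'s::semiring_1 \<Rightarrow> 'l::comm_monoid_add \<Rightarrow> 'l"
    and actM :: "'s \<Rightarrow> 'm::comm_monoid_add \<Rightarrow> 'm"
    and actN :: "'s \<Rightarrow> 'n::comm_monoid_add \<Rightarrow> 'n"
    and f :: "'l \<Rightarrow> 'm" and g :: "'m \<Rightarrow> 'n"
  assumes "semimodule actL" and "semimodule actM" and "semimodule actN"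
    and "s_linear actL actM f" and "s_linear actM actN g"
  shows "(inj g \<longrightarrow>
            (k_normal f \<longleftrightarrow> k_normal (g \<circ> f)) \<and>
            (i_normal (g \<circ> f) \<longrightarrow> i_normal f) \<and>
            (normal (g \<circ> f) \<longrightarrow> normal f) \<and>
            (i_normal g \<longrightarrow>
               (i_normal f \<longleftrightarrow> i_normal (g \<circ> f)) \<and>
               (normal f \<longleftrightarrow> normal (g \<circ> f))))
       \<and> (surj f \<longrightarrow>
            (i_normal g \<longleftrightarrow> i_normal (g \<circ> f)) \<and>
            (k_normal (g \<circ> f) \<longrightarrow> k_normal g) \<and>
            (normal (g \<circ> f) \<longrightarrow> normal g) \<and>
            (k_normal f \<longrightarrow>
               (k_normal g \<longleftrightarrow> k_normal (g \<circ> f)) \<and>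
               (normal g \<longleftrightarrow> normal (g \<circ> f))))"
proof -
  have f0: "f 0 = 0" using lin_zero assms(1,2,4) .
  have g0: "g 0 = 0" using lin_zero assms(2,3,5) .
  have a: "k_normal f \<longleftrightarrow> k_normal (g \<circ> f)" if "inj g" using P1a[where f=f, OF that g0] .
  have b: "i_normal (g \<circ> f) \<longrightarrow> i_normal f" if "inj g" using P1b[where f=f, OF that f0 assms(5)] by blast
  have c: "i_normal g \<longrightarrow> (i_normal f \<longleftrightarrow> i_normal (g \<circ> f))" if "inj g"
    using P1c[where f=f, OF that g0 assms(5) _ _ f0] b[OF that] by blast
  have d: "i_normal g \<longleftrightarrow> i_normal (g \<circ> f)" if "surj f" using P2a[where g=g, OF that] .
  have e: "k_normal (g \<circ> f) \<longrightarrow> k_normal g" if "surj f" using P2b[where g=g, OF that assms(4)] by blast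
  have h: "k_normal f \<longrightarrow> (k_normal g \<longleftrightarrow> k_normal (g \<circ> f))" if "surj f"
    using P2c[OF that assms(4) assms(5) g0] e[OF that] by blast
  show ?thesis unfolding normal_def using a b c d e h by auto
qed

end
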